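(* Let $M$ be a graded $R$-module. If the map $\psi^q$ is surjective, then the quasi-compact open subsets of $qp.Spec_g(M)$ (with the quasi-Zariski topology) are closed under finite intersection and form an open base.
   Context: $R=\bigoplus_{g\in G}R_g$ is a graded commutative ring with identity graded by a group $G$, $h(R)=\bigcup_g R_g$; $M$ is a graded $R$-module, $h(M)$ its homogeneous elements. $Gr(I)$ is the graded radical of a graded ideal $I$. $(K:_RM)=\{r: rM\subseteq K\}$. Graded prime submodule: proper graded $P$ with $rm\in P$ ($r\in h(R), m\in h(M)$) implying $m\in P$ or $r\in(P:_RM)$. $Gr_M(K)$: intersection of graded prime submodules containing $K$ ($M$ if none). Graded primeful property of $K$: for each graded prime $p\supseteq(K:_RM)$ there is a graded prime submodule $P\supseteq K$ with $(P:_RM)=p$. Graded quasi-primary submodule: proper graded $Q$ with $rm\in Q$ ($r\in h(R),m\in h(M)$) implying $r\in Gr((Q:_RM))$ or $m\in Gr_M(Q)$. $qp.Spec_g(M)$: graded quasi-primary submodules with the graded primeful property. $qp\text{-}V_M^g(K)=\{Q\in qp.Spec_g(M): Gr((Q:_RM))\supseteq Gr((K:_RM))\}$; the quasi-Zariski topology has closed sets exactly these. $\overline R=R/\mathrm{Ann}(M)$. A graded quasi-primary ideal of $\overline R$ is a proper graded ideal $q$ with $ab\in q$ ($a,b$ homogeneous) implying $a\in Gr(q)$ or $b\in Gr(q)$; $qp.Spec_g(\overline R)$ is the set of them. $\psi^q:qp.Spec_g(M)\to qp.Spec_g(\overline R)$ is $\psi^q(Q)=(Q:_RM)/\mathrm{Ann}(M)$.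 *)

theory Defs
  imports Complex_Main
begin

text \<open>Setting: the commutative ring R is the whole type 'a (class comm_ring_1),
  the module M is the whole type 'b (class ab_group_add) with scalar multiplication
  scale, and the grading group G is the type 'g (class group_add, written additively).\<close>

definition gr_decomp :: "('g \<Rightarrow> 'x::ab_group_add set) \<Rightarrow> 'x \<Rightarrow> ('g \<Rightarrow> 'x) \<Rightarrow> bool" where
  "gr_decomp A x f \<longleftrightarrow> finite {g. f g \<noteq> 0} \<and> (\<forall>g. f g \<in> A g) \<and> x = (\<Sum>g\<in>{g. f g \<noteq> 0}. f g)"

definition direct_sum_grading :: "('g \<Rightarrow> 'x::ab_group_add set) \<Rightarrow> bool" where
  "direct_sum_grading A \<longleftrightarrow>
     (\<forall>g. 0 \<in> A g \<and> (\<forall>x\<in>A g. \<forall>y\<in>A g. x + y \<in> A g) \<and> (\<forall>x\<in>A g. - x \<in> A g))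
   \<and> (\<forall>x. \<exists>!f. gr_decomp A x f)"

definition comp :: "('g \<Rightarrow> 'x::ab_group_add set) \<Rightarrow> 'x \<Rightarrow> 'g \<Rightarrow> 'x" where
  "comp A x = (THE f. gr_decomp A x f)"

definition homog :: "('g \<Rightarrow> 'x set) \<Rightarrow> 'x set" where
  "homog A = (\<Union>g. A g)"

definition graded_ring :: "('g::group_add \<Rightarrow> 'a::comm_ring_1 set) \<Rightarrow> bool" where
  "graded_ring Rg \<longleftrightarrow> direct_sum_grading Rg \<and>
     (\<forall>g h. \<forall>a\<in>Rg g. \<forall>b\<in>Rg h. a * b \<in> Rg (g + h))"


definition graded_module ::
  "('a::comm_ring_1 \<Rightarrow> 'b::ab_group_add \<Rightarrow> 'b) \<Rightarrow> ('g::group_add \<Rightarrow> 'a set) \<Rightarrow> ('g \<Rightarrow> 'b set) \<Rightarrow> bool" where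
  "graded_module scale Rg Mg \<longleftrightarrow> module scale \<and> graded_ring Rg \<and> direct_sum_grading Mg \<and>
     (\<forall>g h. \<forall>a\<in>Rg g. \<forall>m\<in>Mg h. scale a m \<in> Mg (g + h))"

definition graded_set :: "('g \<Rightarrow> 'x::ab_group_add set) \<Rightarrow> 'x set \<Rightarrow> bool" where
  "graded_set A N \<longleftrightarrow> (\<forall>x\<in>N. \<forall>g. comp A x g \<in> N)"

definition gr_ideal :: "('g \<Rightarrow> 'a::comm_ring_1 set) \<Rightarrow> 'a set \<Rightarrow> bool" where
  "gr_ideal Rg I \<longleftrightarrow> 0 \<in> I \<and> (\<forall>x\<in>I. \<forall>y\<in>I. x + y \<in> I) \<and> (\<forall>r. \<forall>x\<in>I. r * x \<in> I)
     \<and> graded_set Rg I"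

definition gr_submodule :: "('a::comm_ring_1 \<Rightarrow> 'b::ab_group_add \<Rightarrow> 'b) \<Rightarrow> ('g \<Rightarrow> 'b set) \<Rightarrow> 'b set \<Rightarrow> bool" where
  "gr_submodule scale Mg N \<longleftrightarrow> 0 \<in> N \<and> (\<forall>x\<in>N. \<forall>y\<in>N. x + y \<in> N) \<and> (\<forall>r. \<forall>x\<in>N. scale r x \<in> N)
     \<and> graded_set Mg N"

definition colon :: "('a \<Rightarrow> 'b \<Rightarrow> 'b) \<Rightarrow> 'b set \<Rightarrow> 'a set" where
  "colon scale K = {r. \<forall>m. scale r m \<in> K}"

definition Ann :: "('a \<Rightarrow> 'b::zero \<Rightarrow> 'b) \<Rightarrow> 'a set" where
  "Ann scale = colon scale {0}"

definition Gr :: "('g \<Rightarrow> 'a::comm_ring_1 set) \<Rightarrow> 'a set \<Rightarrow> 'a set" where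
  "Gr Rg I = {r. \<forall>g. \<exists>n>0. (comp Rg r g) ^ n \<in> I}"

definition gr_prime_ideal :: "('g \<Rightarrow> 'a::comm_ring_1 set) \<Rightarrow> 'a set \<Rightarrow> bool" where
  "gr_prime_ideal Rg p \<longleftrightarrow> gr_ideal Rg p \<and> p \<noteq> UNIV \<and>
     (\<forall>a\<in>homog Rg. \<forall>b\<in>homog Rg. a * b \<in> p \<longrightarrow> a \<in> p \<or> b \<in> p)"

definition gr_prime_submodule ::
  "('a::comm_ring_1 \<Rightarrow> 'b::ab_group_add \<Rightarrow> 'b) \<Rightarrow> ('g \<Rightarrow> 'a set) \<Rightarrow> ('g \<Rightarrow> 'b set) \<Rightarrow> 'b set \<Rightarrow> bool" where
  "gr_prime_submodule scale Rg Mg P \<longleftrightarrow> gr_submodule scale Mg P \<and> P \<noteq> UNIV \<and>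
     (\<forall>r\<in>homog Rg. \<forall>m\<in>homog Mg. scale r m \<in> P \<longrightarrow> m \<in> P \<or> r \<in> colon scale P)"

text \<open>Gr_M(K): intersection of graded prime submodules containing K (M = UNIV if none).\<close>
definition GrM ::
  "('a::comm_ring_1 \<Rightarrow> 'b::ab_group_add \<Rightarrow> 'b) \<Rightarrow> ('g \<Rightarrow> 'a set) \<Rightarrow> ('g \<Rightarrow> 'b set) \<Rightarrow> 'b set \<Rightarrow> 'b set" where
  "GrM scale Rg Mg K = \<Inter>{P. gr_prime_submodule scale Rg Mg P \<and> K \<subseteq> P}"

definition gr_primeful ::
  "('a::comm_ring_1 \<Rightarrow> 'b::ab_group_add \<Rightarrow> 'b) \<Rightarrow> ('g \<Rightarrow> 'a set) \<Rightarrow> ('g \<Rightarrow> 'b set) \<Rightarrow> 'b set \<Rightarrow> bool" where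
  "gr_primeful scale Rg Mg K \<longleftrightarrow>
     (\<forall>p. gr_prime_ideal Rg p \<and> colon scale K \<subseteq> p \<longrightarrow>
        (\<exists>P. gr_prime_submodule scale Rg Mg P \<and> K \<subseteq> P \<and> colon scale P = p))"

definition gr_quasi_primary_submodule ::
  "('a::comm_ring_1 \<Rightarrow> 'b::ab_group_add \<Rightarrow> 'b) \<Rightarrow> ('g \<Rightarrow> 'a set) \<Rightarrow> ('g \<Rightarrow> 'b set) \<Rightarrow> 'b set \<Rightarrow> bool" where
  "gr_quasi_primary_submodule scale Rg Mg Q \<longleftrightarrow> gr_submodule scale Mg Q \<and> Q \<noteq> UNIV \<and>
     (\<forall>r\<in>homog Rg. \<forall>m\<in>homog Mg. scale r m \<in> Q \<longrightarrow>
        r \<in> Gr Rg (colon scale Q) \<or> m \<in> GrM scale Rg Mg Q)"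

definition qpSpec ::
  "('a::comm_ring_1 \<Rightarrow> 'b::ab_group_add \<Rightarrow> 'b) \<Rightarrow> ('g \<Rightarrow> 'a set) \<Rightarrow> ('g \<Rightarrow> 'b set) \<Rightarrow> 'b set set" where
  "qpSpec scale Rg Mg = {Q. gr_quasi_primary_submodule scale Rg Mg Q \<and> gr_primeful scale Rg Mg Q}"

definition qpV ::
  "('a::comm_ring_1 \<Rightarrow> 'b::ab_group_add \<Rightarrow> 'b) \<Rightarrow> ('g \<Rightarrow> 'a set) \<Rightarrow> ('g \<Rightarrow> 'b set) \<Rightarrow> 'b set \<Rightarrow> 'b set set" where
  "qpV scale Rg Mg K = {Q \<in> qpSpec scale Rg Mg. Gr Rg (colon scale K) \<subseteq> Gr Rg (colon scale Q)}"

definition qp_open ::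
  "('a::comm_ring_1 \<Rightarrow> 'b::ab_group_add \<Rightarrow> 'b) \<Rightarrow> ('g \<Rightarrow> 'a set) \<Rightarrow> ('g \<Rightarrow> 'b set) \<Rightarrow> 'b set set \<Rightarrow> bool" where
  "qp_open scale Rg Mg U \<longleftrightarrow>
     (\<exists>K. gr_submodule scale Mg K \<and> U = qpSpec scale Rg Mg - qpV scale Rg Mg K)"

definition qp_quasi_compact_open ::
  "('a::comm_ring_1 \<Rightarrow> 'b::ab_group_add \<Rightarrow> 'b) \<Rightarrow> ('g \<Rightarrow> 'a set) \<Rightarrow> ('g \<Rightarrow> 'b set) \<Rightarrow> 'b set set \<Rightarrow> bool" where
  "qp_quasi_compact_open scale Rg Mg U \<longleftrightarrow> qp_open scale Rg Mg U \<and>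
     (\<forall>\<U>. (\<forall>W\<in>\<U>. qp_open scale Rg Mg W) \<and> U \<subseteq> \<Union>\<U> \<longrightarrow>
        (\<exists>\<F>\<subseteq>\<U>. finite \<F> \<and> U \<subseteq> \<Union>\<F>))"

text \<open>Graded quasi-primary ideals of R (used for those of R/Ann(M) via correspondence).\<close>
definition gr_quasi_primary_ideal :: "('g \<Rightarrow> 'a::comm_ring_1 set) \<Rightarrow> 'a set \<Rightarrow> bool" where
  "gr_quasi_primary_ideal Rg q \<longleftrightarrow> gr_ideal Rg q \<and> q \<noteq> UNIV \<and>
     (\<forall>a\<in>homog Rg. \<forall>b\<in>homog Rg. a * b \<in> q \<longrightarrow> a \<in> Gr Rg q \<or> b \<in> Gr Rg q)"

text \<open>Surjectivity of psi^q : qp.Spec_g(M) -> qp.Spec_g(R/Ann(M)), Q |-> (Q:M)/Ann(M).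
  Graded quasi-primary ideals of R/Ann(M) are exactly q/Ann(M) for graded
  quasi-primary ideals q of R containing Ann(M); so surjectivity says every such q
  is (Q:M) for some Q in qp.Spec_g(M).\<close>
definition psi_q_surjective ::
  "('a::comm_ring_1 \<Rightarrow> 'b::ab_group_add \<Rightarrow> 'b) \<Rightarrow> ('g \<Rightarrow> 'a set) \<Rightarrow> ('g \<Rightarrow> 'b set) \<Rightarrow> bool" where
  "psi_q_surjective scale Rg Mg \<longleftrightarrow>
     (\<forall>q. gr_quasi_primary_ideal Rg q \<and> Ann scale \<subseteq> q \<longrightarrow>
        (\<exists>Q\<in>qpSpec scale Rg Mg. colon scale Q = q))"

end

theory Submission
  imports Defs
begin

lemma dsg_zero: "direct_sum_grading A \<Longrightarrow> 0 \<in> A g"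
  by (simp add: direct_sum_grading_def)
lemma dsg_add: "direct_sum_grading A \<Longrightarrow> x \<in> A g \<Longrightarrow> y \<in> A g \<Longrightarrow> x + y \<in> A g"
  by (simp add: direct_sum_grading_def)

lemma comp_decomp:
  assumes "direct_sum_grading A"
  shows "gr_decomp A x (comp A x)"
proof -
  from assms have "\<exists>!f. gr_decomp A x f" by (simp add: direct_sum_grading_def)
  then show ?thesis unfolding comp_def by (rule theI')
qed

lemma comp_in: "direct_sum_grading A \<Longrightarrow> comp A x g \<in> A g"
  using comp_decomp[of A x] by (simp add: gr_decomp_def)

lemma comp_fin: "direct_sum_grading A \<Longrightarrow> finite {g. comp A x g \<noteq> 0}"
  using comp_decomp[of A x] by (simp add: gr_decomp_def)

lemma comp_sum_eq:
  assumes "direct_sum_grading A" "finite S" "{g. comp A x g \<noteq> 0} \<subseteq> S"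
  shows "x = (\<Sum>g\<in>S. comp A x g)"
proof -
  have "x = (\<Sum>g\<in>{g. comp A x g \<noteq> 0}. comp A x g)"
    using comp_decomp[OF assms(1), of x] by (simp add: gr_decomp_def)
  also have "\<dots> = (\<Sum>g\<in>S. comp A x g)"
    by (rule sum.mono_neutral_left) (use assms in auto)
  finally show ?thesis .
qed

lemma comp_eq:
  assumes "direct_sum_grading A" "finite S" "\<And>g. f g \<in> A g" "\<And>g. g \<notin> S \<Longrightarrow> f g = 0"
    and "x = (\<Sum>g\<in>S. f g)"
  shows "comp A x = f"
proof -
  have sub: "{g. f g \<noteq> 0} \<subseteq> S" using assms(4) by blast
  have fin: "finite {g. f g \<noteq> 0}" using finite_subset[OF sub assms(2)] .
  have "x = (\<Sum>g\<in>{g. f g \<noteq> 0}. f g)"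
    unfolding assms(5) by (rule sum.mono_neutral_right) (use assms sub in auto)
  then have d: "gr_decomp A x f" using fin assms(3) by (simp add: gr_decomp_def)
  from assms(1) have "\<exists>!f. gr_decomp A x f" by (simp add: direct_sum_grading_def)
  then show ?thesis unfolding comp_def using d by (simp add: the1_equality)
qed

lemma comp_homog:
  assumes "direct_sum_grading A" "x \<in> A d"
  shows "comp A x = (\<lambda>g. if g = d then x else 0)"
  by (rule comp_eq[where S="{d}"]) (use assms dsg_zero in auto)

lemma comp_zero: "direct_sum_grading A \<Longrightarrow> comp A 0 = (\<lambda>g. 0)"
  by (rule comp_eq[where S="{}"]) (auto simp: dsg_zero)

lemma comp_add:
  assumes "direct_sum_grading A"
  shows "comp A (x + y) g = comp A x g + comp A y g"
proof -
  let ?S = "{g. comp A x g \<noteq> 0} \<union> {g. comp A y g \<noteq> 0}"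
  have fin: "finite ?S" using comp_fin[OF assms] by auto
  have "comp A (x + y) = (\<lambda>g. comp A x g + comp A y g)"
  proof (rule comp_eq[where S="?S"])
    show "x + y = (\<Sum>g\<in>?S. comp A x g + comp A y g)"
      using comp_sum_eq[OF assms fin, of x] comp_sum_eq[OF assms fin, of y]
      by (simp add: sum.distrib)
  qed (use assms fin in \<open>auto intro: dsg_add comp_in\<close>)
  then show ?thesis by simp
qed

lemma comp_sum:
  assumes "direct_sum_grading A" "finite F"
  shows "comp A (\<Sum>i\<in>F. f i) g = (\<Sum>i\<in>F. comp A (f i) g)"
  using assms(2) by induction (auto simp: comp_zero[OF assms(1)] comp_add[OF assms(1)])

lemma homog_iff: "x \<in> homog A \<longleftrightarrow> (\<exists>g. x \<in> A g)"
  by (simp add: homog_def)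


lemma sum_closed: "0 \<in> I \<Longrightarrow> (\<forall>x\<in>I. \<forall>y\<in>I. x + y \<in> I) \<Longrightarrow> finite F \<Longrightarrow> (\<And>i. i \<in> F \<Longrightarrow> f i \<in> I)
  \<Longrightarrow> (\<Sum>i\<in>F. f i) \<in> I"
proof -
  assume a: "0 \<in> I" "\<forall>x\<in>I. \<forall>y\<in>I. x + y \<in> I" "finite F" "\<And>i. i \<in> F \<Longrightarrow> f i \<in> I"
  from a(3,4) show ?thesis by (induction F rule: finite_induct) (use a(1,2) in auto)
qed

locale gm =
  fixes scale :: "'a::comm_ring_1 \<Rightarrow> 'b::ab_group_add \<Rightarrow> 'b"
    and Rg :: "'g::group_add \<Rightarrow> 'a set"
    and Mg :: "'g \<Rightarrow> 'b set"
  assumes gm: "graded_module scale Rg Mg"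
begin

lemma md: "module scale" using gm by (simp add: graded_module_def)
lemma R: "direct_sum_grading Rg" using gm by (simp add: graded_module_def graded_ring_def)
lemma M: "direct_sum_grading Mg" using gm by (simp add: graded_module_def)
lemma Rmul: "a \<in> Rg g \<Longrightarrow> b \<in> Rg h \<Longrightarrow> a * b \<in> Rg (g + h)"
  using gm by (simp add: graded_module_def graded_ring_def)
lemma Msc: "a \<in> Rg g \<Longrightarrow> m \<in> Mg h \<Longrightarrow> scale a m \<in> Mg (g + h)"
  using gm by (simp add: graded_module_def)

lemma sc0l[simp]: "scale 0 m = 0" using module.scale_zero_left[OF md] .
lemma sc0r[simp]: "scale r 0 = 0" using module.scale_zero_right[OF md] .
lemma scl: "scale (a + b) m = scale a m + scale b m" using module.scale_left_distrib[OF md] .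
lemma scr: "scale a (m + n) = scale a m + scale a n" using module.scale_right_distrib[OF md] .
lemma scsc[simp]: "scale a (scale b m) = scale (a * b) m" using module.scale_scale[OF md] .
lemma scsuml: "scale (sum f A) m = (\<Sum>a\<in>A. scale (f a) m)" using module.scale_sum_left[OF md] .
lemma scsumr: "scale a (sum f A) = (\<Sum>x\<in>A. scale a (f x))" using module.scale_sum_right[OF md] .

lemma comp_scale_homog:
  assumes m: "m \<in> Mg h"
  shows "comp Mg (scale r m) g = scale (comp Rg r (g - h)) m"
proof -
  let ?Sr = "{k. comp Rg r k \<noteq> 0}"
  let ?S = "(\<lambda>k. k + h) ` ?Sr"
  have fin: "finite ?S" using comp_fin[OF R] by blast
  have "comp Mg (scale r m) = (\<lambda>g. scale (comp Rg r (g - h)) m)"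
  proof (rule comp_eq[OF M fin])
    fix g
    show "scale (comp Rg r (g - h)) m \<in> Mg g"
      using Msc[OF comp_in[OF R] m, of r "g - h"] by simp
    show "g \<notin> ?S \<Longrightarrow> scale (comp Rg r (g - h)) m = 0"
    proof -
      assume "g \<notin> ?S"
      then have "comp Rg r (g - h) = 0"
        by (metis (mono_tags, lifting) diff_add_cancel image_eqI mem_Collect_eq)
      then show ?thesis by simp
    qed
  next
    have inj: "inj_on (\<lambda>k. k + h) ?Sr" by (auto simp: inj_on_def)
    have "(\<Sum>g\<in>?S. scale (comp Rg r (g - h)) m) = (\<Sum>k\<in>?Sr. scale (comp Rg r (k + h - h)) m)"
      by (subst sum.reindex[OF inj]) simp
    also have "\<dots> = scale (\<Sum>k\<in>?Sr. comp Rg r k) m" by (simp add: scsuml)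
    also have "(\<Sum>k\<in>?Sr. comp Rg r k) = r"
      using comp_sum_eq[OF R comp_fin[OF R], of r r] by simp
    finally show "scale r m = (\<Sum>g\<in>?S. scale (comp Rg r (g - h)) m)" by simp
  qed
  then show ?thesis by simp
qed

lemma comp_mult_homog:
  assumes e: "e \<in> Rg h"
  shows "comp Rg (r * e) g = comp Rg r (g - h) * e"
proof -
  let ?Sr = "{k. comp Rg r k \<noteq> 0}"
  let ?S = "(\<lambda>k. k + h) ` ?Sr"
  have fin: "finite ?S" using comp_fin[OF R] by blast
  have "comp Rg (r * e) = (\<lambda>g. comp Rg r (g - h) * e)"
  proof (rule comp_eq[OF R fin])
    fix g
    show "comp Rg r (g - h) * e \<in> Rg g"
      using Rmul[OF comp_in[OF R] e, of r "g - h"] by simp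
    show "g \<notin> ?S \<Longrightarrow> comp Rg r (g - h) * e = 0"
    proof -
      assume "g \<notin> ?S"
      then have "comp Rg r (g - h) = 0"
        by (metis (mono_tags, lifting) diff_add_cancel image_eqI mem_Collect_eq)
      then show ?thesis by simp
    qed
  next
    have inj: "inj_on (\<lambda>k. k + h) ?Sr" by (auto simp: inj_on_def)
    have "(\<Sum>g\<in>?S. comp Rg r (g - h) * e) = (\<Sum>k\<in>?Sr. comp Rg r (k + h - h) * e)"
      by (subst sum.reindex[OF inj]) simp
    also have "\<dots> = (\<Sum>k\<in>?Sr. comp Rg r k) * e" by (simp add: sum_distrib_right)
    also have "(\<Sum>k\<in>?Sr. comp Rg r k) = r"
      using comp_sum_eq[OF R comp_fin[OF R], of r r] by simp
    finally show "r * e = (\<Sum>g\<in>?S. comp Rg r (g - h) * e)" by simp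
  qed
  then show ?thesis by simp
qed

lemma pow_homog: "a \<in> Rg g \<Longrightarrow> n > 0 \<Longrightarrow> a ^ n \<in> homog Rg"
proof (induction n)
  case 0 then show ?case by simp
next
  case (Suc n)
  show ?case
  proof (cases "n = 0")
    case True then show ?thesis using Suc by (auto simp: homog_iff)
  next
    case False
    then obtain h where "a ^ n \<in> Rg h" using Suc by (auto simp: homog_iff)
    then show ?thesis using Rmul[OF Suc(2)] by (auto simp: homog_iff)
  qed
qed

lemma homog_pow: "a \<in> homog Rg \<Longrightarrow> n > 0 \<Longrightarrow> a ^ n \<in> homog Rg"
  using pow_homog by (auto simp: homog_iff)

lemma homog_mult: "a \<in> homog Rg \<Longrightarrow> b \<in> homog Rg \<Longrightarrow> a * b \<in> homog Rg"
  using Rmul by (auto simp: homog_iff) blast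

lemma homog_scale: "a \<in> homog Rg \<Longrightarrow> m \<in> homog Mg \<Longrightarrow> scale a m \<in> homog Mg"
  using Msc by (auto simp: homog_iff) blast

lemma Gr_homog:
  assumes "x \<in> homog Rg" "0 \<in> I"
  shows "x \<in> Gr Rg I \<longleftrightarrow> (\<exists>n>0. x ^ n \<in> I)"
proof -
  obtain d where d: "x \<in> Rg d" using assms by (auto simp: homog_iff)
  show ?thesis
  proof
    assume "x \<in> Gr Rg I"
    then show "\<exists>n>0. x ^ n \<in> I" unfolding Gr_def using comp_homog[OF R d] by (simp, metis)
  next
    assume "\<exists>n>0. x ^ n \<in> I"
    then show "x \<in> Gr Rg I" unfolding Gr_def using comp_homog[OF R d] assms(2)
      by (auto intro: exI[of _ 1])
  qed
qed

lemma in_by_comps: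
  assumes "0 \<in> I" "\<forall>x\<in>I. \<forall>y\<in>I. x + y \<in> I" "\<And>g. comp Rg r g \<in> I"
  shows "r \<in> I"
proof -
  have "r = (\<Sum>g\<in>{g. comp Rg r g \<noteq> 0}. comp Rg r g)"
    using comp_sum_eq[OF R comp_fin[OF R]] by blast
  also have "\<dots> \<in> I" by (rule sum_closed) (use assms comp_fin[OF R] in auto)
  finally show ?thesis .
qed

lemma colon_by_homog:
  assumes N: "gr_submodule scale Mg N" and h: "\<And>m. m \<in> homog Mg \<Longrightarrow> scale b m \<in> N"
  shows "b \<in> colon scale N"
  unfolding colon_def
proof (intro CollectI allI)
  fix m
  have "m = (\<Sum>g\<in>{g. comp Mg m g \<noteq> 0}. comp Mg m g)"
    using comp_sum_eq[OF M comp_fin[OF M]] by blast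
  then have "scale b m = (\<Sum>g\<in>{g. comp Mg m g \<noteq> 0}. scale b (comp Mg m g))"
    by (metis scsumr)
  also have "\<dots> \<in> N"
    by (rule sum_closed) (use N h comp_fin[OF M] comp_in[OF M] in \<open>auto simp: gr_submodule_def homog_iff\<close>, blast)
  finally show "scale b m \<in> N" .
qed

lemma colon_ideal:
  assumes N: "gr_submodule scale Mg N"
  shows "gr_ideal Rg (colon scale N)"
  unfolding gr_ideal_def
proof (intro conjI)
  show "0 \<in> colon scale N" using N by (simp add: colon_def gr_submodule_def)
  show "\<forall>x\<in>colon scale N. \<forall>y\<in>colon scale N. x + y \<in> colon scale N"
    using N by (simp add: colon_def gr_submodule_def scl)
  show "\<forall>r. \<forall>x\<in>colon scale N. r * x \<in> colon scale N"
    using N by (simp add: colon_def gr_submodule_def flip: scsc)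
  show "graded_set Rg (colon scale N)"
    unfolding graded_set_def
  proof (intro ballI allI)
    fix r g assume r: "r \<in> colon scale N"
    show "comp Rg r g \<in> colon scale N"
    proof (rule colon_by_homog[OF N])
      fix m assume "m \<in> homog Mg"
      then obtain h where m: "m \<in> Mg h" by (auto simp: homog_iff)
      have "scale r m \<in> N" using r by (simp add: colon_def)
      then have "comp Mg (scale r m) (g + h) \<in> N" using N by (simp add: gr_submodule_def graded_set_def)
      then show "scale (comp Rg r g) m \<in> N" using comp_scale_homog[OF m] by (simp add: add_diff_cancel)
    qed
  qed
qed

end

context gm begin

lemma ideal_plus:
  assumes p: "gr_ideal Rg p" and x: "x \<in> Rg d"
  shows "gr_ideal Rg {u + r * x | u r. u \<in> p}"
  unfolding gr_ideal_def
proof (intro conjI)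
  let ?P = "{u + r * x | u r. u \<in> p}"
  have p0: "0 \<in> p" and padd: "\<And>a b. a \<in> p \<Longrightarrow> b \<in> p \<Longrightarrow> a + b \<in> p"
    and pmul: "\<And>s a. a \<in> p \<Longrightarrow> s * a \<in> p" and pg: "\<And>a g. a \<in> p \<Longrightarrow> comp Rg a g \<in> p"
    using p by (auto simp: gr_ideal_def graded_set_def)
  show "0 \<in> ?P" using p0 by (metis (mono_tags, lifting) add_0 mem_Collect_eq mult_zero_left)
  show "\<forall>a\<in>?P. \<forall>b\<in>?P. a + b \<in> ?P"
  proof (intro ballI)
    fix a b assume "a \<in> ?P" "b \<in> ?P"
    then obtain u1 r1 u2 r2 where "a = u1 + r1 * x" "u1 \<in> p" "b = u2 + r2 * x" "u2 \<in> p" by blast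
    then have "a + b = (u1 + u2) + (r1 + r2) * x" "u1 + u2 \<in> p" using padd by (auto simp: algebra_simps)
    then show "a + b \<in> ?P" by blast
  qed
  show "\<forall>s. \<forall>a\<in>?P. s * a \<in> ?P"
  proof (intro allI ballI)
    fix s a assume "a \<in> ?P"
    then obtain u r where "a = u + r * x" "u \<in> p" by blast
    then have "s * a = s * u + (s * r) * x" "s * u \<in> p" using pmul by (auto simp: algebra_simps)
      (metis mult.commute)
    then show "s * a \<in> ?P" by blast
  qed
  show "graded_set Rg ?P"
    unfolding graded_set_def
  proof (intro ballI allI)
    fix a g assume "a \<in> ?P"
    then obtain u r where "a = u + r * x" "u \<in> p" by blast
    then have "comp Rg a g = comp Rg u g + comp Rg r (g - d) * x"
      using comp_add[OF R] comp_mult_homog[OF x] by simp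
    then show "comp Rg a g \<in> ?P" using pg[OF \<open>u \<in> p\<close>] by blast
  qed
qed

lemma exists_prime:
  assumes I: "gr_ideal Rg I" and c: "c \<in> homog Rg" and nc: "\<forall>n>0. c ^ n \<notin> I"
  shows "\<exists>p. gr_prime_ideal Rg p \<and> I \<subseteq> p \<and> (\<forall>n>0. c ^ n \<notin> p)"
proof -
  define \<A> where "\<A> = {J. gr_ideal Rg J \<and> I \<subseteq> J \<and> (\<forall>n>0. c ^ n \<notin> J)}"
  have "I \<in> \<A>" using I nc by (simp add: \<A>_def)
  then have ne: "\<A> \<noteq> {}" by blast
  have "\<exists>M\<in>\<A>. \<forall>X\<in>\<A>. M \<subseteq> X \<longrightarrow> X = M"
  proof (rule subset_Zorn_nonempty[OF ne])
    fix \<C> assume Cne: "\<C> \<noteq> {}" and ch: "subset.chain \<A> \<C>"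
    then have CA: "\<C> \<subseteq> \<A>" and tot: "\<And>X Y. X \<in> \<C> \<Longrightarrow> Y \<in> \<C> \<Longrightarrow> X \<subseteq> Y \<or> Y \<subseteq> X"
      by (auto simp: subset.chain_def)
    have idl: "\<And>J. J \<in> \<C> \<Longrightarrow> gr_ideal Rg J" using CA by (auto simp: \<A>_def)
    show "\<Union>\<C> \<in> \<A>"
      unfolding \<A>_def
    proof (intro CollectI conjI)
      show "gr_ideal Rg (\<Union>\<C>)"
        unfolding gr_ideal_def
      proof (intro conjI)
        show "0 \<in> \<Union>\<C>" using Cne idl by (auto simp: gr_ideal_def)
        show "\<forall>x\<in>\<Union>\<C>. \<forall>y\<in>\<Union>\<C>. x + y \<in> \<Union>\<C>"
        proof (intro ballI)
          fix x y assume "x \<in> \<Union>\<C>" "y \<in> \<Union>\<C>"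
          then obtain X Y where "x \<in> X" "X \<in> \<C>" "y \<in> Y" "Y \<in> \<C>" by blast
          then show "x + y \<in> \<Union>\<C>" using tot[of X Y] idl[of X] idl[of Y]
            unfolding gr_ideal_def by (metis UnionI subsetD)
        qed
        show "\<forall>r. \<forall>x\<in>\<Union>\<C>. r * x \<in> \<Union>\<C>" using idl by (auto simp: gr_ideal_def)
        show "graded_set Rg (\<Union>\<C>)" using idl by (fastforce simp: gr_ideal_def graded_set_def)
      qed
      show "I \<subseteq> \<Union>\<C>" using Cne CA by (auto simp: \<A>_def)
      show "\<forall>n>0. c ^ n \<notin> \<Union>\<C>" using CA by (auto simp: \<A>_def)
    qed
  qed
  then obtain p where pA: "p \<in> \<A>" and pmax: "\<And>X. X \<in> \<A> \<Longrightarrow> p \<subseteq> X \<Longrightarrow> X = p" by blast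
  have p: "gr_ideal Rg p" and Ip: "I \<subseteq> p" and pc: "\<forall>n>0. c ^ n \<notin> p" using pA by (auto simp: \<A>_def)
  have padd: "\<And>a b. a \<in> p \<Longrightarrow> b \<in> p \<Longrightarrow> a + b \<in> p"
    and pmul: "\<And>s a. a \<in> p \<Longrightarrow> s * a \<in> p"
    using p by (auto simp: gr_ideal_def)
  have ext: "\<exists>n>0. \<exists>u r. u \<in> p \<and> c ^ n = u + r * x" if x: "x \<in> homog Rg" "x \<notin> p" for x
  proof -
    obtain d where xd: "x \<in> Rg d" using x by (auto simp: homog_iff)
    let ?P = "{u + r * x | u r. u \<in> p}"
    have gi: "gr_ideal Rg ?P" by (rule ideal_plus[OF p xd])
    have sub: "p \<subseteq> ?P"
    proof
      fix u assume "u \<in> p" then show "u \<in> ?P" by (metis (mono_tags, lifting) add_0_right mem_Collect_eq mult_zero_left)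
    qed
    have "x = 0 + 1 * x" by simp
    then have "x \<in> ?P" using p unfolding gr_ideal_def by blast
    then have "?P \<noteq> p" using x by blast
    then have "?P \<notin> \<A>" using pmax sub by blast
    then show ?thesis using gi sub Ip unfolding \<A>_def by blast
  qed
  have prime: "\<forall>a\<in>homog Rg. \<forall>b\<in>homog Rg. a * b \<in> p \<longrightarrow> a \<in> p \<or> b \<in> p"
  proof (intro ballI impI, rule ccontr)
    fix a b assume a: "a \<in> homog Rg" and b: "b \<in> homog Rg" and ab: "a * b \<in> p"
      and "\<not> (a \<in> p \<or> b \<in> p)"
    then have "a \<notin> p" "b \<notin> p" by auto
    obtain n u1 r1 where n: "n > 0" "u1 \<in> p" "c ^ n = u1 + r1 * a" using ext[OF a \<open>a \<notin> p\<close>] by blast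
    obtain m u2 r2 where m: "m > 0" "u2 \<in> p" "c ^ m = u2 + r2 * b" using ext[OF b \<open>b \<notin> p\<close>] by blast
    have "c ^ (n + m) = (u2 + r2 * b) * u1 + (r1 * a) * u2 + (r1 * r2) * (a * b)"
      using n(3) m(3) by (simp add: power_add algebra_simps)
    also have "\<dots> \<in> p" using padd pmul n(2) m(2) ab by simp
    finally show False using pc n(1) by auto
  qed
  have "p \<noteq> UNIV" using pc by (metis UNIV_I power_one_right zero_less_one)
  then have "gr_prime_ideal Rg p" using p prime by (simp add: gr_prime_ideal_def)
  then show ?thesis using Ip pc by blast
qed

lemma colon_mono: "Q \<subseteq> P \<Longrightarrow> colon scale Q \<subseteq> colon scale P"
  by (auto simp: colon_def)

lemma prime_colon:
  assumes P: "gr_prime_submodule scale Rg Mg P" and a: "a \<in> homog Rg" and b: "b \<in> homog Rg"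
    and ab: "a * b \<in> colon scale P" and na: "a \<notin> colon scale P"
  shows "b \<in> colon scale P"
proof (rule colon_by_homog)
  show "gr_submodule scale Mg P" using P by (simp add: gr_prime_submodule_def)
  fix m assume m: "m \<in> homog Mg"
  have "scale a (scale b m) \<in> P" using ab by (simp add: colon_def)
  moreover have "scale b m \<in> homog Mg" using homog_scale[OF b m] .
  ultimately show "scale b m \<in> P" using P a na by (auto simp: gr_prime_submodule_def)
qed

lemma prime_colon_pow:
  assumes P: "gr_prime_submodule scale Rg Mg P" and c: "c \<in> homog Rg"
  shows "n > 0 \<Longrightarrow> c ^ n \<in> colon scale P \<Longrightarrow> c \<in> colon scale P"
proof (induction n)
  case 0 then show ?case by simp
next
  case (Suc n)
  show ?case
  proof (cases "n = 0")
    case True then show ?thesis using Suc by simp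
  next
    case False
    have "c * c ^ n \<in> colon scale P" using Suc by simp
    then show ?thesis using prime_colon[OF P c homog_pow[OF c]] Suc False by blast
  qed
qed

lemma char:
  assumes Q: "gr_submodule scale Mg Q" and pf: "gr_primeful scale Rg Mg Q" and c: "c \<in> homog Rg"
  shows "(\<exists>n>0. c ^ n \<in> colon scale Q) \<longleftrightarrow>
         (\<forall>P. gr_prime_submodule scale Rg Mg P \<and> Q \<subseteq> P \<longrightarrow> c \<in> colon scale P)"
proof
  assume "\<exists>n>0. c ^ n \<in> colon scale Q"
  then obtain n where n: "n > 0" "c ^ n \<in> colon scale Q" by blast
  show "\<forall>P. gr_prime_submodule scale Rg Mg P \<and> Q \<subseteq> P \<longrightarrow> c \<in> colon scale P"
    using prime_colon_pow[OF _ c n(1)] n(2) colon_mono by blast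
next
  assume all: "\<forall>P. gr_prime_submodule scale Rg Mg P \<and> Q \<subseteq> P \<longrightarrow> c \<in> colon scale P"
  show "\<exists>n>0. c ^ n \<in> colon scale Q"
  proof (rule ccontr)
    assume "\<not> (\<exists>n>0. c ^ n \<in> colon scale Q)"
    then obtain p where p: "gr_prime_ideal Rg p" "colon scale Q \<subseteq> p" "\<forall>n>0. c ^ n \<notin> p"
      using exists_prime[OF colon_ideal[OF Q] c] by blast
    then obtain P where P: "gr_prime_submodule scale Rg Mg P" "Q \<subseteq> P" "colon scale P = p"
      using pf by (auto simp: gr_primeful_def)
    then have "c \<in> p" using all by blast
    then show False using p(3) by (metis power_one_right zero_less_one)
  qed
qed

end

context gm begin

definition Dset :: "'a \<Rightarrow> 'b set set" where
  "Dset c = {Q \<in> qpSpec scale Rg Mg. c \<notin> Gr Rg (colon scale Q)}"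

lemma X_sub: "Q \<in> qpSpec scale Rg Mg \<Longrightarrow> gr_submodule scale Mg Q"
  by (simp add: qpSpec_def gr_quasi_primary_submodule_def)
lemma X_pf: "Q \<in> qpSpec scale Rg Mg \<Longrightarrow> gr_primeful scale Rg Mg Q"
  by (simp add: qpSpec_def)
lemma colon0: "gr_submodule scale Mg Q \<Longrightarrow> 0 \<in> colon scale Q"
  by (simp add: colon_def gr_submodule_def)

lemma inGr:
  assumes Q: "Q \<in> qpSpec scale Rg Mg" and c: "c \<in> homog Rg"
  shows "c \<in> Gr Rg (colon scale Q) \<longleftrightarrow>
         (\<forall>P. gr_prime_submodule scale Rg Mg P \<and> Q \<subseteq> P \<longrightarrow> c \<in> colon scale P)"
  using Gr_homog[OF c colon0[OF X_sub[OF Q]]] char[OF X_sub[OF Q] X_pf[OF Q] c] by simp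

lemma Gr_pow:
  assumes "c \<in> homog Rg" "0 \<in> I" "n > 0" "c ^ n \<in> Gr Rg I"
  shows "c \<in> Gr Rg I"
proof -
  obtain k where "k > 0" "(c ^ n) ^ k \<in> I" using Gr_homog[OF homog_pow[OF assms(1,3)] assms(2)] assms(4) by blast
  then show ?thesis using Gr_homog[OF assms(1,2)] assms(3) by (metis power_mult nat_0_less_mult_iff)
qed

lemma QP:
  assumes Q: "Q \<in> qpSpec scale Rg Mg" and a: "a \<in> homog Rg" and b: "b \<in> homog Rg"
    and ab: "a * b \<in> Gr Rg (colon scale Q)" and na: "a \<notin> Gr Rg (colon scale Q)"
  shows "b \<in> Gr Rg (colon scale Q)"
proof -
  have z: "0 \<in> colon scale Q" using colon0[OF X_sub[OF Q]] .
  obtain n where n: "n > 0" "(a * b) ^ n \<in> colon scale Q"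
    using Gr_homog[OF homog_mult[OF a b] z] ab by blast
  have nan: "a ^ n \<notin> Gr Rg (colon scale Q)" using Gr_pow[OF a z n(1)] na by blast
  have qp: "gr_quasi_primary_submodule scale Rg Mg Q" using Q by (simp add: qpSpec_def)
  have inG: "scale (b ^ n) m \<in> GrM scale Rg Mg Q" if m: "m \<in> homog Mg" for m
  proof -
    have "scale (a ^ n) (scale (b ^ n) m) \<in> Q" using n(2) by (simp add: colon_def power_mult_distrib)
    moreover have "scale (b ^ n) m \<in> homog Mg" using homog_scale[OF homog_pow[OF b n(1)] m] .
    ultimately show ?thesis using qp homog_pow[OF a n(1)] nan
      unfolding gr_quasi_primary_submodule_def by blast
  qed
  have "\<forall>P. gr_prime_submodule scale Rg Mg P \<and> Q \<subseteq> P \<longrightarrow> b \<in> colon scale P"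
  proof (intro allI impI)
    fix P assume P: "gr_prime_submodule scale Rg Mg P \<and> Q \<subseteq> P"
    have "b ^ n \<in> colon scale P"
    proof (rule colon_by_homog)
      show "gr_submodule scale Mg P" using P by (simp add: gr_prime_submodule_def)
      fix m assume "m \<in> homog Mg"
      then show "scale (b ^ n) m \<in> P" using inG P unfolding GrM_def by blast
    qed
    then show "b \<in> colon scale P" using prime_colon_pow[OF _ b n(1)] P by blast
  qed
  then show ?thesis using inGr[OF Q b] by blast
qed

lemma Gr_mult:
  assumes Q: "Q \<in> qpSpec scale Rg Mg" and a: "a \<in> homog Rg" and b: "b \<in> homog Rg"
    and ha: "a \<in> Gr Rg (colon scale Q)"
  shows "a * b \<in> Gr Rg (colon scale Q)" "b * a \<in> Gr Rg (colon scale Q)"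
proof -
  have z: "0 \<in> colon scale Q" using colon0[OF X_sub[OF Q]] .
  have I: "gr_ideal Rg (colon scale Q)" using colon_ideal[OF X_sub[OF Q]] .
  obtain n where n: "n > 0" "a ^ n \<in> colon scale Q" using Gr_homog[OF a z] ha by blast
  have "(a * b) ^ n = b ^ n * a ^ n" by (simp add: power_mult_distrib mult.commute)
  then have "(a * b) ^ n \<in> colon scale Q" using I n(2) by (simp add: gr_ideal_def)
  then show "a * b \<in> Gr Rg (colon scale Q)" using Gr_homog[OF homog_mult[OF a b] z] n(1) by blast
  then show "b * a \<in> Gr Rg (colon scale Q)" by (simp add: mult.commute)
qed

lemma D_mult:
  assumes a: "a \<in> homog Rg" and b: "b \<in> homog Rg"
  shows "Dset (a * b) = Dset a \<inter> Dset b"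
  unfolding Dset_def using QP[OF _ a b] Gr_mult[OF _ a b] Gr_mult[OF _ b a] by auto

lemma T1:
  assumes K: "gr_submodule scale Mg K" and Q: "Q \<in> qpSpec scale Rg Mg"
  shows "Q \<notin> qpV scale Rg Mg K \<longleftrightarrow> (\<exists>e\<in>homog Rg. e \<in> colon scale K \<and> Q \<in> Dset e)"
proof
  have zQ: "0 \<in> colon scale Q" using colon0[OF X_sub[OF Q]] .
  assume "Q \<notin> qpV scale Rg Mg K"
  then obtain r where r: "r \<in> Gr Rg (colon scale K)" "r \<notin> Gr Rg (colon scale Q)"
    using Q by (auto simp: qpV_def)
  then obtain g where g: "\<forall>n>0. comp Rg r g ^ n \<notin> colon scale Q" unfolding Gr_def by blast
  obtain n where n: "n > 0" "comp Rg r g ^ n \<in> colon scale K" using r(1) unfolding Gr_def by blast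
  let ?e = "comp Rg r g ^ n"
  have eh: "?e \<in> homog Rg" using pow_homog[OF comp_in[OF R] n(1)] .
  have "?e \<notin> Gr Rg (colon scale Q)"
  proof
    assume "?e \<in> Gr Rg (colon scale Q)"
    then obtain k where "k > 0" "?e ^ k \<in> colon scale Q" using Gr_homog[OF eh zQ] by blast
    then show False using g n(1) by (metis power_mult nat_0_less_mult_iff)
  qed
  then show "\<exists>e\<in>homog Rg. e \<in> colon scale K \<and> Q \<in> Dset e" using eh n(2) Q by (auto simp: Dset_def)
next
  assume "\<exists>e\<in>homog Rg. e \<in> colon scale K \<and> Q \<in> Dset e"
  then obtain e where e: "e \<in> homog Rg" "e \<in> colon scale K" "Q \<in> Dset e" by blast
  have "e \<in> Gr Rg (colon scale K)" using Gr_homog[OF e(1) colon0[OF K]] e(2) by (metis power_one_right zero_less_one)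
  then show "Q \<notin> qpV scale Rg Mg K" using e(3) by (auto simp: Dset_def qpV_def)
qed

lemma T1':
  assumes K: "gr_submodule scale Mg K"
  shows "qpSpec scale Rg Mg - qpV scale Rg Mg K = \<Union>(Dset ` (colon scale K \<inter> homog Rg))"
  using T1[OF K] by (auto simp: Dset_def)

lemma T2:
  assumes C: "C \<subseteq> homog Rg"
  shows "qp_open scale Rg Mg (\<Union>(Dset ` C))"
proof -
  define K where "K = \<Inter>{N. gr_submodule scale Mg N \<and> (\<forall>c\<in>C. \<forall>m. scale c m \<in> N)}"
  have K: "gr_submodule scale Mg K"
    unfolding K_def gr_submodule_def graded_set_def by blast
  have cK: "c \<in> colon scale K" if "c \<in> C" for c using that by (auto simp: K_def colon_def)
  have "qpSpec scale Rg Mg - qpV scale Rg Mg K = \<Union>(Dset ` C)"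
  proof
    show "\<Union>(Dset ` C) \<subseteq> qpSpec scale Rg Mg - qpV scale Rg Mg K"
    proof
      fix Q assume "Q \<in> \<Union>(Dset ` C)"
      then obtain c where c: "c \<in> C" "Q \<in> Dset c" by blast
      then have Q: "Q \<in> qpSpec scale Rg Mg" by (simp add: Dset_def)
      show "Q \<in> qpSpec scale Rg Mg - qpV scale Rg Mg K"
        using T1[OF K Q] c cK C Q by blast
    qed
  next
    show "qpSpec scale Rg Mg - qpV scale Rg Mg K \<subseteq> \<Union>(Dset ` C)"
    proof
      fix Q assume "Q \<in> qpSpec scale Rg Mg - qpV scale Rg Mg K"
      then have Q: "Q \<in> qpSpec scale Rg Mg" and nQ: "Q \<notin> qpV scale Rg Mg K" by auto
      obtain e where e: "e \<in> homog Rg" "e \<in> colon scale K" "Q \<in> Dset e" using T1[OF K Q] nQ by blast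
      show "Q \<in> \<Union>(Dset ` C)"
      proof (rule ccontr)
        assume "Q \<notin> \<Union>(Dset ` C)"
        then have cG: "\<forall>c\<in>C. c \<in> Gr Rg (colon scale Q)" using Q by (auto simp: Dset_def)
        have "\<forall>P. gr_prime_submodule scale Rg Mg P \<and> Q \<subseteq> P \<longrightarrow> e \<in> colon scale P"
        proof (intro allI impI)
          fix P assume P: "gr_prime_submodule scale Rg Mg P \<and> Q \<subseteq> P"
          have "\<forall>c\<in>C. \<forall>m. scale c m \<in> P"
            using cG inGr[OF Q] C P by (auto simp: colon_def)
          then have "K \<subseteq> P" using P unfolding K_def gr_prime_submodule_def by blast
          then show "e \<in> colon scale P" using e(2) colon_mono by blast
        qed
        then have "e \<in> Gr Rg (colon scale Q)" using inGr[OF Q e(1)] by blast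
        then show False using e(3) by (simp add: Dset_def)
      qed
    qed
  qed
  then show ?thesis using K unfolding qp_open_def by blast
qed

end

lemma sum_if_sub: "finite G \<Longrightarrow> F \<subseteq> G \<Longrightarrow> (\<Sum>e\<in>G. if e \<in> F then f e else 0) = (\<Sum>e\<in>F. f e)"
  by (metis sum.inter_restrict Int_absorb1)

context gm begin

definition Jset :: "'a set \<Rightarrow> 'a set" where
  "Jset E = {x. \<exists>F r. F \<subseteq> E \<and> finite F \<and> x = (\<Sum>e\<in>F. r e * e)}"

lemma JI: "F \<subseteq> E \<Longrightarrow> finite F \<Longrightarrow> x = (\<Sum>e\<in>F. r e * e) \<Longrightarrow> x \<in> Jset E"
  unfolding Jset_def by (rule CollectI, intro exI conjI)

lemma J_ideal:
  assumes E: "E \<subseteq> homog Rg"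
  shows "gr_ideal Rg (Jset E)"
  unfolding gr_ideal_def
proof (intro conjI)
  show "0 \<in> Jset E" unfolding Jset_def by (rule CollectI, rule exI[of _ "{}"]) simp
  show "\<forall>x\<in>Jset E. \<forall>y\<in>Jset E. x + y \<in> Jset E"
  proof (intro ballI)
    fix x y assume "x \<in> Jset E" "y \<in> Jset E"
    then obtain F1 r1 F2 r2 where 1: "F1 \<subseteq> E" "finite F1" "x = (\<Sum>e\<in>F1. r1 e * e)"
      and 2: "F2 \<subseteq> E" "finite F2" "y = (\<Sum>e\<in>F2. r2 e * e)" unfolding Jset_def by auto
    let ?G = "F1 \<union> F2"
    let ?r = "\<lambda>e. (if e \<in> F1 then r1 e else 0) + (if e \<in> F2 then r2 e else 0)"
    have fG: "finite ?G" using 1 2 by simp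
    have "(\<Sum>e\<in>?G. ?r e * e) = (\<Sum>e\<in>?G. if e \<in> F1 then r1 e * e else 0) + (\<Sum>e\<in>?G. if e \<in> F2 then r2 e * e else 0)"
      unfolding distrib_right sum.distrib by (intro arg_cong2[where f="(+)"] sum.cong) auto
    also have "\<dots> = x + y" using 1 2 fG by (simp add: sum_if_sub)
    finally show "x + y \<in> Jset E" using 1 2 fG by (intro JI[of ?G E "x + y" ?r]) auto
  qed
  show "\<forall>s. \<forall>x\<in>Jset E. s * x \<in> Jset E"
  proof (intro allI ballI)
    fix s x assume "x \<in> Jset E"
    then obtain F r where 1: "F \<subseteq> E" "finite F" "x = (\<Sum>e\<in>F. r e * e)" unfolding Jset_def by blast
    have "s * x = (\<Sum>e\<in>F. (s * r e) * e)" using 1 by (simp add: sum_distrib_left mult.assoc)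
    then show "s * x \<in> Jset E" using 1 by (intro JI[of F]) auto
  qed
  show "graded_set Rg (Jset E)"
    unfolding graded_set_def
  proof (intro ballI allI)
    fix x g assume "x \<in> Jset E"
    then obtain F r where 1: "F \<subseteq> E" "finite F" "x = (\<Sum>e\<in>F. r e * e)" unfolding Jset_def by blast
    define dg where "dg e = (SOME d. e \<in> Rg d)" for e
    have dg: "e \<in> Rg (dg e)" if "e \<in> F" for e
      using that 1(1) E unfolding dg_def homog_iff by (metis (mono_tags, lifting) someI_ex subsetD homog_iff)
    have "comp Rg x g = (\<Sum>e\<in>F. comp Rg (r e * e) g)" using 1 comp_sum[OF R] by simp
    also have "\<dots> = (\<Sum>e\<in>F. comp Rg (r e) (g - dg e) * e)"
      by (rule sum.cong) (use comp_mult_homog dg in auto)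
    finally show "comp Rg x g \<in> Jset E" using 1 by (intro JI[of F]) auto
  qed
qed

lemma J_sub: "E \<subseteq> Jset E"
proof
  fix e assume "e \<in> E"
  then have "{e} \<subseteq> E" "finite {e}" "e = (\<Sum>x\<in>{e}. (\<lambda>_. 1) x * x)" by auto
  then show "e \<in> Jset E" by (intro JI[of "{e}" E e "\<lambda>_. 1"]) auto
qed

lemma Ann_ideal: "gr_ideal Rg (Ann scale)"
proof -
  have "gr_submodule scale Mg {0}"
    by (simp add: gr_submodule_def graded_set_def comp_zero[OF M])
  then show ?thesis unfolding Ann_def by (rule colon_ideal)
qed

lemma T3:
  assumes surj: "psi_q_surjective scale Rg Mg" and c: "c \<in> homog Rg"
    and U: "\<forall>W\<in>\<U>. qp_open scale Rg Mg W" and cov: "Dset c \<subseteq> \<Union>\<U>"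
  shows "\<exists>\<F>\<subseteq>\<U>. finite \<F> \<and> Dset c \<subseteq> \<Union>\<F>"
proof (cases "\<U> = {}")
  case True then show ?thesis using cov by auto
next
  case False
  then obtain W0 where W0: "W0 \<in> \<U>" by blast
  define E where "E = {e \<in> homog Rg. \<exists>W\<in>\<U>. Dset e \<subseteq> W}"
  have Eh: "E \<subseteq> homog Rg" by (auto simp: E_def)
  have cov2: "\<Union>\<U> \<subseteq> \<Union>(Dset ` E)"
  proof
    fix Q assume "Q \<in> \<Union>\<U>"
    then obtain W where W: "W \<in> \<U>" "Q \<in> W" by blast
    obtain K where K: "gr_submodule scale Mg K" "W = qpSpec scale Rg Mg - qpV scale Rg Mg K"
      using U W(1) unfolding qp_open_def by blast
    have WD: "W = \<Union>(Dset ` (colon scale K \<inter> homog Rg))" using T1'[OF K(1)] K(2) by simp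
    then obtain e where e: "e \<in> colon scale K \<inter> homog Rg" "Q \<in> Dset e" using W(2) by blast
    have "Dset e \<subseteq> W" using e(1) WD by blast
    then have "e \<in> E" unfolding E_def using e(1) W(1) by blast
    then show "Q \<in> \<Union>(Dset ` E)" using e(2) by blast
  qed
  have JIdl: "gr_ideal Rg (Jset E)" using J_ideal[OF Eh] .
  have AJ: "Ann scale \<subseteq> Jset E"
  proof
    fix r assume r: "r \<in> Ann scale"
    show "r \<in> Jset E"
    proof (rule in_by_comps)
      show "0 \<in> Jset E" "\<forall>x\<in>Jset E. \<forall>y\<in>Jset E. x + y \<in> Jset E" using JIdl by (auto simp: gr_ideal_def)
      fix g
      have rg: "comp Rg r g \<in> Ann scale" using r Ann_ideal by (auto simp: gr_ideal_def graded_set_def)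
      have h: "comp Rg r g \<in> homog Rg" using comp_in[OF R] by (auto simp: homog_iff)
      have "Dset (comp Rg r g) = {}"
      proof -
        { fix Q assume Q: "Q \<in> qpSpec scale Rg Mg"
          have "comp Rg r g \<in> colon scale Q" using rg X_sub[OF Q]
            by (auto simp: Ann_def colon_def gr_submodule_def)
          then have "comp Rg r g \<in> Gr Rg (colon scale Q)"
            using Gr_homog[OF h colon0[OF X_sub[OF Q]]] by (metis power_one_right zero_less_one) }
        then show ?thesis by (auto simp: Dset_def)
      qed
      then have "comp Rg r g \<in> E" using h W0 unfolding E_def by blast
      then show "comp Rg r g \<in> Jset E" using J_sub by blast
    qed
  qed
  have "\<exists>n>0. c ^ n \<in> Jset E"
  proof (rule ccontr)
    assume "\<not> (\<exists>n>0. c ^ n \<in> Jset E)"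
    then obtain p where p: "gr_prime_ideal Rg p" "Jset E \<subseteq> p" "\<forall>n>0. c ^ n \<notin> p"
      using exists_prime[OF JIdl c] by blast
    have pI: "gr_ideal Rg p" using p(1) by (simp add: gr_prime_ideal_def)
    have inGrp: "x \<in> Gr Rg p" if "x \<in> p" for x
    proof -
      have "\<forall>g. comp Rg x g ^ 1 \<in> p" using that pI unfolding gr_ideal_def graded_set_def by simp
      then have "\<forall>g. \<exists>n>0. comp Rg x g ^ n \<in> p" using zero_less_one by blast
      then show ?thesis unfolding Gr_def by simp
    qed
    have "gr_quasi_primary_ideal Rg p"
      using p(1) inGrp unfolding gr_quasi_primary_ideal_def gr_prime_ideal_def by meson
    moreover have "Ann scale \<subseteq> p" using AJ p(2) by blast
    ultimately obtain Q where Q: "Q \<in> qpSpec scale Rg Mg" "colon scale Q = p"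
      using surj unfolding psi_q_surjective_def by blast
    have z: "0 \<in> p" using pI by (simp add: gr_ideal_def)
    have "c \<notin> Gr Rg p" using Gr_homog[OF c z] p(3) by blast
    then have "Q \<in> Dset c" using Q by (simp add: Dset_def)
    then obtain e where e: "e \<in> E" "Q \<in> Dset e" using cov cov2 by blast
    have "e \<in> p" using e(1) J_sub p(2) by blast
    then show False using inGrp e(2) Q by (simp add: Dset_def)
  qed
  then obtain n F r where n: "n > 0" "F \<subseteq> E" "finite F" "c ^ n = (\<Sum>e\<in>F. r e * e)"
    unfolding Jset_def by blast
  have "\<forall>e\<in>F. \<exists>W. W \<in> \<U> \<and> Dset e \<subseteq> W" using n(2) by (auto simp: E_def)
  then have "\<exists>Wf. \<forall>e\<in>F. Wf e \<in> \<U> \<and> Dset e \<subseteq> Wf e" by (rule bchoice)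
  then obtain Wf where Wf0: "\<forall>e\<in>F. Wf e \<in> \<U> \<and> Dset e \<subseteq> Wf e" by blast
  then have Wf: "\<And>e. e \<in> F \<Longrightarrow> Wf e \<in> \<U> \<and> Dset e \<subseteq> Wf e" by blast
  have "Dset c \<subseteq> \<Union>(Dset ` F)"
  proof
    fix Q assume QD: "Q \<in> Dset c"
    then have Q: "Q \<in> qpSpec scale Rg Mg" by (simp add: Dset_def)
    show "Q \<in> \<Union>(Dset ` F)"
    proof (rule ccontr)
      assume "Q \<notin> \<Union>(Dset ` F)"
      then have eG: "\<forall>e\<in>F. e \<in> Gr Rg (colon scale Q)" using Q by (auto simp: Dset_def)
      have cnh: "c ^ n \<in> homog Rg" using homog_pow[OF c n(1)] .
      have "\<forall>P. gr_prime_submodule scale Rg Mg P \<and> Q \<subseteq> P \<longrightarrow> c ^ n \<in> colon scale P"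
      proof (intro allI impI)
        fix P assume P: "gr_prime_submodule scale Rg Mg P \<and> Q \<subseteq> P"
        have PI: "gr_ideal Rg (colon scale P)"
          using colon_ideal P by (simp add: gr_prime_submodule_def)
        have "\<forall>e\<in>F. e \<in> colon scale P"
        proof
          fix e assume eF: "e \<in> F"
          then have eh: "e \<in> homog Rg" using n(2) Eh by blast
          have "e \<in> Gr Rg (colon scale Q)" using eG eF by blast
          then show "e \<in> colon scale P" using inGr[OF Q eh] P by blast
        qed
        then have "(\<Sum>e\<in>F. r e * e) \<in> colon scale P"
          by (intro sum_closed) (use PI n(3) in \<open>auto simp: gr_ideal_def\<close>)
        then show "c ^ n \<in> colon scale P" using n(4) by simp
      qed
      then have "c ^ n \<in> Gr Rg (colon scale Q)" using inGr[OF Q cnh] by blast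
      then have "c \<in> Gr Rg (colon scale Q)" using Gr_pow[OF c colon0[OF X_sub[OF Q]] n(1)] by blast
      then show False using QD by (simp add: Dset_def)
    qed
  qed
  then have "Dset c \<subseteq> \<Union>(Wf ` F)" using Wf by blast
  moreover have "Wf ` F \<subseteq> \<U>" using Wf by blast
  ultimately show ?thesis using n(3) by blast
qed

lemma D_qc:
  assumes surj: "psi_q_surjective scale Rg Mg" and c: "c \<in> homog Rg"
  shows "qp_quasi_compact_open scale Rg Mg (Dset c)"
  unfolding qp_quasi_compact_open_def
  using T2[of "{c}"] c T3[OF surj c] by auto

end

context gm begin

lemma qc_union:
  assumes surj: "psi_q_surjective scale Rg Mg" and fin: "finite C" and C: "C \<subseteq> homog Rg"
  shows "qp_quasi_compact_open scale Rg Mg (\<Union>(Dset ` C))"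
  unfolding qp_quasi_compact_open_def
proof (intro conjI allI impI)
  show "qp_open scale Rg Mg (\<Union>(Dset ` C))" using T2[OF C] .
  fix \<U> assume a: "(\<forall>W\<in>\<U>. qp_open scale Rg Mg W) \<and> \<Union>(Dset ` C) \<subseteq> \<Union>\<U>"
  have "\<forall>c\<in>C. \<exists>\<F>. \<F> \<subseteq> \<U> \<and> finite \<F> \<and> Dset c \<subseteq> \<Union>\<F>"
  proof
    fix c assume c: "c \<in> C"
    then have ch: "c \<in> homog Rg" using C by blast
    have "Dset c \<subseteq> \<Union>\<U>" using a c by blast
    moreover have "\<forall>W\<in>\<U>. qp_open scale Rg Mg W" using a by blast
    moreover have "\<forall>\<U>. (\<forall>W\<in>\<U>. qp_open scale Rg Mg W) \<and> Dset c \<subseteq> \<Union>\<U> \<longrightarrow>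
        (\<exists>\<F>\<subseteq>\<U>. finite \<F> \<and> Dset c \<subseteq> \<Union>\<F>)"
      using D_qc[OF surj ch] unfolding qp_quasi_compact_open_def by (rule conjunct2)
    ultimately have "\<exists>\<F>\<subseteq>\<U>. finite \<F> \<and> Dset c \<subseteq> \<Union>\<F>" by simp
    then show "\<exists>\<F>. \<F> \<subseteq> \<U> \<and> finite \<F> \<and> Dset c \<subseteq> \<Union>\<F>" by blast
  qed
  then have "\<exists>Fs. \<forall>c\<in>C. Fs c \<subseteq> \<U> \<and> finite (Fs c) \<and> Dset c \<subseteq> \<Union>(Fs c)" by (rule bchoice)
  then obtain Fs where Fs: "\<forall>c\<in>C. Fs c \<subseteq> \<U> \<and> finite (Fs c) \<and> Dset c \<subseteq> \<Union>(Fs c)" by blast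
  have "\<Union>(Fs ` C) \<subseteq> \<U>" "finite (\<Union>(Fs ` C))" using Fs fin by auto
  moreover have "\<Union>(Dset ` C) \<subseteq> \<Union>(\<Union>(Fs ` C))"
  proof
    fix Q assume "Q \<in> \<Union>(Dset ` C)"
    then obtain c where c: "c \<in> C" "Q \<in> Dset c" by blast
    then have "Q \<in> \<Union>(Fs c)" using Fs by blast
    then show "Q \<in> \<Union>(\<Union>(Fs ` C))" using c(1) by blast
  qed
  ultimately show "\<exists>\<F>\<subseteq>\<U>. finite \<F> \<and> \<Union>(Dset ` C) \<subseteq> \<Union>\<F>"
    by (intro exI[of _ "\<Union>(Fs ` C)"] conjI)
qed

lemma open_D:
  assumes "qp_open scale Rg Mg U"
  shows "\<exists>C. C \<subseteq> homog Rg \<and> U = \<Union>(Dset ` C)"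
proof -
  obtain K where K: "gr_submodule scale Mg K" "U = qpSpec scale Rg Mg - qpV scale Rg Mg K"
    using assms unfolding qp_open_def by blast
  then have "U = \<Union>(Dset ` (colon scale K \<inter> homog Rg))" using T1'[OF K(1)] by simp
  then show ?thesis by blast
qed

lemma qc_finite:
  assumes "qp_quasi_compact_open scale Rg Mg U"
  shows "\<exists>F. finite F \<and> F \<subseteq> homog Rg \<and> U = \<Union>(Dset ` F)"
proof -
  have op: "qp_open scale Rg Mg U" using assms by (simp add: qp_quasi_compact_open_def)
  obtain C where C: "C \<subseteq> homog Rg" "U = \<Union>(Dset ` C)" using open_D[OF op] by blast
  have "\<forall>W\<in>Dset ` C. qp_open scale Rg Mg W"
  proof
    fix W assume "W \<in> Dset ` C"
    then obtain c where c: "c \<in> C" "W = Dset c" by blast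
    then have "{c} \<subseteq> homog Rg" using C by blast
    then show "qp_open scale Rg Mg W" using T2[of "{c}"] c by simp
  qed
  moreover have "U \<subseteq> \<Union>(Dset ` C)" using C(2) by simp
  moreover have "\<forall>\<U>. (\<forall>W\<in>\<U>. qp_open scale Rg Mg W) \<and> U \<subseteq> \<Union>\<U> \<longrightarrow>
        (\<exists>\<F>\<subseteq>\<U>. finite \<F> \<and> U \<subseteq> \<Union>\<F>)"
    using assms unfolding qp_quasi_compact_open_def by (rule conjunct2)
  ultimately have "\<exists>\<F>\<subseteq>Dset ` C. finite \<F> \<and> U \<subseteq> \<Union>\<F>" by simp
  then obtain \<F> where F: "\<F> \<subseteq> Dset ` C" "finite \<F>" "U \<subseteq> \<Union>\<F>" by blast
  obtain B where B: "B \<subseteq> C" "finite B" "\<F> = Dset ` B"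
    using finite_subset_image[OF F(2,1)] by blast
  have "U = \<Union>(Dset ` B)" using F(3) B C(2) by blast
  then show ?thesis using B C(1) by blast
qed

end

theorem theorem3p17:
  fixes scale :: "'a::comm_ring_1 \<Rightarrow> 'b::ab_group_add \<Rightarrow> 'b"
    and Rg :: "'g::group_add \<Rightarrow> 'a set"
    and Mg :: "'g \<Rightarrow> 'b set"
  assumes "graded_module scale Rg Mg"
    and "psi_q_surjective scale Rg Mg"
  shows "(\<forall>U V. qp_quasi_compact_open scale Rg Mg U \<and> qp_quasi_compact_open scale Rg Mg V
            \<longrightarrow> qp_quasi_compact_open scale Rg Mg (U \<inter> V))
       \<and> (\<forall>U. qp_open scale Rg Mg U \<longrightarrow>
            (\<exists>\<B>. (\<forall>W\<in>\<B>. qp_quasi_compact_open scale Rg Mg W) \<and> U = \<Union>\<B>))"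
proof -
  interpret gm scale Rg Mg by unfold_locales (rule assms(1))
  have part1: "qp_quasi_compact_open scale Rg Mg (U \<inter> V)"
    if U: "qp_quasi_compact_open scale Rg Mg U" and V: "qp_quasi_compact_open scale Rg Mg V" for U V
  proof -
    obtain F1 where F1: "finite F1" "F1 \<subseteq> homog Rg" "U = \<Union>(Dset ` F1)" using qc_finite[OF U] by blast
    obtain F2 where F2: "finite F2" "F2 \<subseteq> homog Rg" "V = \<Union>(Dset ` F2)" using qc_finite[OF V] by blast
    define C where "C = (\<lambda>(a, b). a * b) ` (F1 \<times> F2)"
    have finC: "finite C" using F1(1) F2(1) by (simp add: C_def)
    have Ch: "C \<subseteq> homog Rg" using F1(2) F2(2) homog_mult by (auto simp: C_def)
    have "U \<inter> V = \<Union>(Dset ` C)"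
    proof
      show "U \<inter> V \<subseteq> \<Union>(Dset ` C)"
      proof
        fix Q assume "Q \<in> U \<inter> V"
        then obtain a b where ab: "a \<in> F1" "Q \<in> Dset a" "b \<in> F2" "Q \<in> Dset b" using F1(3) F2(3) by blast
        have ah: "a \<in> homog Rg" and bh: "b \<in> homog Rg" using ab F1(2) F2(2) by blast+
        have "Q \<in> Dset (a * b)" using D_mult[OF ah bh] ab by simp
        moreover have "a * b \<in> C" unfolding C_def by (rule image_eqI[of _ _ "(a, b)"]) (use ab in simp_all)
        ultimately show "Q \<in> \<Union>(Dset ` C)" by blast
      qed
    next
      show "\<Union>(Dset ` C) \<subseteq> U \<inter> V"
      proof
        fix Q assume "Q \<in> \<Union>(Dset ` C)"
        then obtain p where p: "p \<in> F1 \<times> F2" "Q \<in> Dset ((\<lambda>(a, b). a * b) p)" unfolding C_def by blast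
        obtain a b where pab: "p = (a, b)" by (cases p)
        have ab: "a \<in> F1" "b \<in> F2" "Q \<in> Dset (a * b)" using p pab by auto
        have ah: "a \<in> homog Rg" and bh: "b \<in> homog Rg" using ab F1(2) F2(2) by blast+
        have "Q \<in> Dset a" "Q \<in> Dset b" using D_mult[OF ah bh] ab(3) by simp_all
        then show "Q \<in> U \<inter> V" using ab F1(3) F2(3) by blast
      qed
    qed
    then show ?thesis using qc_union[OF assms(2) finC Ch] by (simp only:)
  qed
  have part2: "\<exists>\<B>. (\<forall>W\<in>\<B>. qp_quasi_compact_open scale Rg Mg W) \<and> U = \<Union>\<B>"
    if U: "qp_open scale Rg Mg U" for U
  proof -
    obtain C where C: "C \<subseteq> homog Rg" "U = \<Union>(Dset ` C)" using open_D[OF U] by blast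
    have "\<forall>W\<in>Dset ` C. qp_quasi_compact_open scale Rg Mg W"
      using D_qc[OF assms(2)] C(1) by blast
    then show ?thesis using C(2) by blast
  qed
  show ?thesis using part1 part2 by blast
qed

end
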